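(* Let $n,g,k,p\in\mathbb N$. Define the following four sets. (1) $\widetilde a_{g,p}(n)$ is the set of fixed-point-free involutions $\pi$ of $[2n]$ such that $\#(\pi^{-1}1_{2n})=n+1-2g$, $\pi(a)$ is odd for every even $a\in[2n]$, and the restriction of $\pi^{-1}1_{2n}$ to the odd elements $\{1,3,\ldots,2n-1\}$ (which it preserves) has exactly $p$ cycles. Here $1_{2n}=(1,2,\ldots,2n)$. (2) On $\pm[2n]$ let $\tau_0=(1,-1)\cdots(2n,-2n)$, $\tau_2=(-1,2)(-2,3)\cdots(-2n,1)$, $B(n)=\{1,3,\ldots,2n-1\}\cup\{-2,-4,\ldots,-2n\}$ and $W(n)=\{2,4,\ldots,2n\}\cup\{-1,-3,\ldots,1-2n\}$. $\widetilde b_{k,p}(n)$ is the set of fixed-point-free involutions $\tau_1$ of $\pm[2n]$ such that $\#(\tau_2\tau_1)=2n+2-2k$, $\tau_0\tau_1=\tau_1\tau_0$, $\tau_0\tau_1$ is fixed-point free, there exists $a\in[2n]$ with $\tau_1(a)\in[2n]$, $\tau_1(B(n))\subseteq B(n)$, and the restriction of $\tau_2\tau_1$ to $W(n)$ (which it preserves) has exactly $2p$ cycles. (3) $\widehat a_{g,p}(n)$ is the set of permutations $\pi$ of $[n]$ with $\#(\pi)=p$ and $\#(\pi^{-1}1_n)=n-p+1-2g$, where $1_n=(1,\ldots,n)$. (4) On $\pm[n]$ let $\tau_0=(1,-1)\cdots(n,-n)$ and $\widetilde 1_n=(1,\ldots,n)(-n,\ldots,-1)$. $\widehat b_{k,p}(n)$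 is the set of permutations $\tau_1$ of $\pm[n]$ such that $\#(\tau_1)=2p$, $\#(\widetilde 1_n\tau_1)=2(n-p+1-k)$, $\tau_0\tau_1\tau_0=\tau_1^{-1}$, $\tau_0\tau_1$ is fixed-point free, and there exists $a\in[n]$ with $\tau_1(a)\in-[n]$. Then there are bijections $\widetilde a_{g,p}(n)\cong\widehat a_{g,p}(n)$ and $\widetilde b_{k,p}(n)\cong\widehat b_{k,p}(n)$.
   Context: Permutations are composed right to left, $(\sigma\rho)(x)=\sigma(\rho(x))$; $\#(\sigma)$ denotes the number of cycles of $\sigma$ including fixed points; $[m]=\{1,\ldots,m\}$, $-[m]=\{-1,\ldots,-m\}$, $\pm[m]=[m]\cup-[m]$. The sets in (1),(2) encode bipartite ribbon graphs (orientable of genus $g$, resp. non-orientable of Euler genus $k$) with $p$ white boundaries, and those in (3),(4) the corresponding combinatorial hypermaps. *)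

theory Defs
  imports "HOL-Combinatorics.Permutations"
begin

text \<open>Permutations are functions int => int, identity outside their support set.
  Composition right to left: sigma rho = sigma o rho.\<close>

definition posset :: "nat \<Rightarrow> int set" where
  "posset m = {1..int m}"

definition negset :: "nat \<Rightarrow> int set" where
  "negset m = {- int m..-1}"

definition pmset :: "nat \<Rightarrow> int set" where
  "pmset m = posset m \<union> negset m"

definition orb :: "(int \<Rightarrow> int) \<Rightarrow> int \<Rightarrow> int set" where
  "orb f x = {y. \<exists>k::nat. (f ^^ k) x = y}"

definition ncycles :: "(int \<Rightarrow> int) \<Rightarrow> int set \<Rightarrow> nat" where
  "ncycles f A = card (orb f ` A)"

definition fpf_involution :: "(int \<Rightarrow> int) \<Rightarrow> int set \<Rightarrow> bool" where
  "fpf_involution f S \<longleftrightarrow> f permutes S \<and> (\<forall>x\<in>S. f (f x) = x \<and> f x \<noteq> x)"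

definition fpf_on :: "(int \<Rightarrow> int) \<Rightarrow> int set \<Rightarrow> bool" where
  "fpf_on f S \<longleftrightarrow> (\<forall>x\<in>S. f x \<noteq> x)"

definition long_cycle :: "nat \<Rightarrow> int \<Rightarrow> int" where
  "long_cycle m = (\<lambda>x. if 1 \<le> x \<and> x < int m then x + 1
                       else if x = int m \<and> m \<ge> 1 then 1 else x)"

definition tau0 :: "nat \<Rightarrow> int \<Rightarrow> int" where
  "tau0 m = (\<lambda>x. if x \<in> pmset m then - x else x)"

text \<open>tau_2 = (-1,2)(-2,3)...(-2n,1) on +-[2n] (given m = 2n).\<close>
definition tau2 :: "nat \<Rightarrow> int \<Rightarrow> int" where
  "tau2 m = (\<lambda>x. if x \<in> negset m then (if - x < int m then - x + 1 else 1)
                 else if x \<in> posset m then (if x = 1 then - int m else - (x - 1))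
                 else x)"

definition long_cycle_pm :: "nat \<Rightarrow> int \<Rightarrow> int" where
  "long_cycle_pm m = (\<lambda>x. if x \<in> negset m then (if x < -1 then x + 1 else - int m)
                         else long_cycle m x)"

definition Bset :: "nat \<Rightarrow> int set" where
  "Bset n = {x \<in> posset (2*n). odd x} \<union> {x \<in> negset (2*n). even x}"

definition Wset :: "nat \<Rightarrow> int set" where
  "Wset n = {x \<in> posset (2*n). even x} \<union> {x \<in> negset (2*n). odd x}"

definition a_tilde :: "nat \<Rightarrow> nat \<Rightarrow> nat \<Rightarrow> (int \<Rightarrow> int) set" where
  "a_tilde g p n = {\<pi>. fpf_involution \<pi> (posset (2*n))
      \<and> int (ncycles (inv \<pi> \<circ> long_cycle (2*n)) (posset (2*n))) = int n + 1 - 2 * int g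
      \<and> (\<forall>a\<in>posset (2*n). even a \<longrightarrow> odd (\<pi> a))
      \<and> ncycles (inv \<pi> \<circ> long_cycle (2*n)) {x \<in> posset (2*n). odd x} = p}"

definition b_tilde :: "nat \<Rightarrow> nat \<Rightarrow> nat \<Rightarrow> (int \<Rightarrow> int) set" where
  "b_tilde k p n = {\<tau>1. fpf_involution \<tau>1 (pmset (2*n))
      \<and> int (ncycles (tau2 (2*n) \<circ> \<tau>1) (pmset (2*n))) = 2 * int n + 2 - 2 * int k
      \<and> tau0 (2*n) \<circ> \<tau>1 = \<tau>1 \<circ> tau0 (2*n)
      \<and> fpf_on (tau0 (2*n) \<circ> \<tau>1) (pmset (2*n))
      \<and> (\<exists>a\<in>posset (2*n). \<tau>1 a \<in> posset (2*n))
      \<and> \<tau>1 ` Bset n \<subseteq> Bset n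
      \<and> ncycles (tau2 (2*n) \<circ> \<tau>1) (Wset n) = 2 * p}"

definition a_hat :: "nat \<Rightarrow> nat \<Rightarrow> nat \<Rightarrow> (int \<Rightarrow> int) set" where
  "a_hat g p n = {\<pi>. \<pi> permutes posset n
      \<and> ncycles \<pi> (posset n) = p
      \<and> int (ncycles (inv \<pi> \<circ> long_cycle n) (posset n)) = int n - int p + 1 - 2 * int g}"

definition b_hat :: "nat \<Rightarrow> nat \<Rightarrow> nat \<Rightarrow> (int \<Rightarrow> int) set" where
  "b_hat k p n = {\<tau>1. \<tau>1 permutes pmset n
      \<and> ncycles \<tau>1 (pmset n) = 2 * p
      \<and> int (ncycles (long_cycle_pm n \<circ> \<tau>1) (pmset n)) = 2 * (int n - int p + 1 - int k)
      \<and> tau0 n \<circ> \<tau>1 \<circ> tau0 n = inv \<tau>1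
      \<and> fpf_on (tau0 n \<circ> \<tau>1) (pmset n)
      \<and> (\<exists>a\<in>posset n. \<tau>1 a \<in> negset n)}"

end

theory Submission
  imports Defs
begin


lemma mem_posset[simp]: "x \<in> posset m \<longleftrightarrow> 1 \<le> x \<and> x \<le> int m"
  by (simp add: posset_def)
lemma mem_negset[simp]: "x \<in> negset m \<longleftrightarrow> - int m \<le> x \<and> x \<le> -1"
  by (auto simp: negset_def)
lemma mem_pmset[simp]: "x \<in> pmset m \<longleftrightarrow> (1 \<le> x \<and> x \<le> int m) \<or> (- int m \<le> x \<and> x \<le> -1)"
  by (simp add: pmset_def)

lemma funpow_conj:
  assumes "\<forall>x\<in>A. f x \<in> A" "\<forall>x\<in>A. g (h x) = h (f x)" "x \<in> A"
  shows "(g^^k) (h x) = h ((f^^k) x) \<and> (f^^k) x \<in> A"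
  using assms(3) by (induction k) (auto simp: assms(1,2))

lemma orb_subset: "\<forall>x\<in>A. f x \<in> A \<Longrightarrow> x \<in> A \<Longrightarrow> orb f x \<subseteq> A"
  unfolding orb_def using funpow_conj[of A f f id x] by auto

lemma orb_self: "x \<in> orb f x"
  unfolding orb_def by (metis (mono_tags) funpow_0 mem_Collect_eq)

lemma orb_conj:
  assumes "\<forall>x\<in>A. f x \<in> A" "\<forall>x\<in>A. g (h x) = h (f x)" "x \<in> A"
  shows "orb g (h x) = h ` orb f x"
  unfolding orb_def using funpow_conj[OF assms] by auto

lemma ncycles_conj:
  assumes "inj_on h A" "h ` A = B" "\<forall>x\<in>A. f x \<in> A" "\<forall>x\<in>A. g (h x) = h (f x)"
  shows "ncycles g B = ncycles f A"
proof -
  have "orb g ` B = (image h) ` (orb f ` A)"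
  proof -
    have "orb g ` B = orb g ` h ` A" using assms(2) by simp
    also have "\<dots> = (\<lambda>x. h ` orb f x) ` A"
      using orb_conj[OF assms(3,4)] by (auto simp: image_image)
    also have "\<dots> = (image h) ` (orb f ` A)" by (simp add: image_image)
    finally show ?thesis .
  qed
  moreover have "inj_on (image h) (orb f ` A)"
    by (rule inj_on_subset[OF inj_on_image_Pow[OF assms(1)]]) (use orb_subset[OF assms(3)] in auto)
  ultimately show ?thesis unfolding ncycles_def by (simp add: card_image)
qed

lemma ncycles_Un:
  assumes "A1 \<inter> A2 = {}" "\<forall>x\<in>A1. f x \<in> A1" "\<forall>x\<in>A2. f x \<in> A2" "finite A1" "finite A2"
  shows "ncycles f (A1 \<union> A2) = ncycles f A1 + ncycles f A2"
proof -
  have d: "orb f ` A1 \<inter> orb f ` A2 = {}"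
  proof (rule ccontr)
    assume "orb f ` A1 \<inter> orb f ` A2 \<noteq> {}"
    then obtain x1 x2 where x: "x1 \<in> A1" "x2 \<in> A2" "orb f x1 = orb f x2" by auto
    then have "x1 \<in> A2" using orb_self[of x1 f] orb_subset[OF assms(3) x(2)] by auto
    then show False using x(1) assms(1) by auto
  qed
  show ?thesis unfolding ncycles_def image_Un
    by (rule card_Un_disjoint) (use assms d in auto)
qed

lemma inv_invol: "f permutes S \<Longrightarrow> \<forall>x\<in>S. f (f x) = x \<Longrightarrow> inv f = f"
proof -
  assume a: "f permutes S" "\<forall>x\<in>S. f (f x) = x"
  have "f \<circ> f = id"
  proof
    fix x show "(f \<circ> f) x = id x"
      using a permutes_not_in[OF a(1)] by (cases "x \<in> S") auto
  qed
  then show ?thesis using inv_unique_comp by blast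
qed

lemma invol_permutes:
  assumes "\<forall>x\<in>S. f x \<in> S \<and> f (f x) = x" "\<forall>x. x \<notin> S \<longrightarrow> f x = x"
  shows "f permutes S"
  unfolding permutes_def
proof (intro conjI allI impI)
  fix x assume "x \<notin> S" then show "f x = x" using assms by auto
next
  fix y show "\<exists>!x. f x = y"
  proof (cases "y \<in> S")
    case True
    show ?thesis
    proof (rule ex1I[of _ "f y"])
      show "f (f y) = y" using True assms by auto
      fix x assume "f x = y" then show "x = f y" using assms True by (metis)
    qed
  next
    case False
    show ?thesis
    proof (rule ex1I[of _ y])
      show "f y = y" using False assms by auto
      fix x assume "f x = y" then show "x = y" using assms False by metis
    qed
  qed
qed

lemma perm_of_inj:
  assumes "finite S" "\<forall>x\<in>S. f x \<in> S" "inj_on f S" "\<forall>x. x \<notin> S \<longrightarrow> f x = x"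
  shows "f permutes S"
proof (rule bij_imp_permutes)
  have "f ` S = S" using endo_inj_surj[OF assms(1) _ assms(3)] assms(2) by auto
  then show "bij_betw f S S" using assms(3) by (simp add: bij_betw_def)
  fix x assume "x \<notin> S" then show "f x = x" using assms(4) by auto
qed



definition Fa :: "nat \<Rightarrow> (int\<Rightarrow>int) \<Rightarrow> int \<Rightarrow> int" where
  "Fa n \<pi> = (\<lambda>i. if i \<in> posset n then (\<pi> (2*i) + 1) div 2 else i)"
definition Ga :: "nat \<Rightarrow> (int\<Rightarrow>int) \<Rightarrow> int \<Rightarrow> int" where
  "Ga n \<rho> = (\<lambda>x. if x \<in> posset (2*n) then (if even x then 2 * \<rho> (x div 2) - 1
                 else 2 * inv \<rho> ((x+1) div 2)) else x)"
definition odds :: "nat \<Rightarrow> int set" where "odds n = {x \<in> posset (2*n). odd x}"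
definition evens :: "nat \<Rightarrow> int set" where "evens n = {x \<in> posset (2*n). even x}"
definition Pa :: "nat \<Rightarrow> (int\<Rightarrow>int) set" where
  "Pa n = {\<pi>. fpf_involution \<pi> (posset (2*n)) \<and> (\<forall>a\<in>posset (2*n). even a \<longrightarrow> odd (\<pi> a))}"


lemma odd_half:
  fixes y N :: int
  assumes "odd y" "1 \<le> y" "y \<le> 2*N"
  shows "1 \<le> (y+1) div 2 \<and> (y+1) div 2 \<le> N \<and> 2*((y+1) div 2) - 1 = y"
proof -
  obtain k where "y = 2*k+1" using assms(1) by (rule oddE)
  then show ?thesis using assms by simp
qed
lemma even_half:
  fixes y N :: int
  assumes "even y" "1 \<le> y" "y \<le> 2*N"
  shows "1 \<le> y div 2 \<and> y div 2 \<le> N \<and> 2*(y div 2) = y"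
proof -
  obtain k where "y = 2*k" using assms(1) by (rule evenE)
  then show ?thesis using assms by simp
qed

lemma lc_simp: "long_cycle m x = (if 1 \<le> x \<and> x < int m then x + 1
                       else if x = int m \<and> m \<ge> 1 then 1 else x)"
  by (simp add: long_cycle_def)

lemma A_a:
  assumes "\<pi> \<in> Pa n"
  shows "Fa n \<pi> permutes posset n"
    "\<forall>x\<in>posset (2*n). odd x \<longrightarrow> even (\<pi> x)"
    "inv \<pi> = \<pi>"
    "ncycles (\<pi> \<circ> long_cycle (2*n)) (odds n) = ncycles (Fa n \<pi>) (posset n)"
    "ncycles (\<pi> \<circ> long_cycle (2*n)) (posset (2*n)) =
       ncycles (Fa n \<pi>) (posset n) + ncycles (inv (Fa n \<pi>) \<circ> long_cycle n) (posset n)"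
proof -
  let ?S = "posset (2*n)"
  let ?\<rho> = "Fa n \<pi>"
  have perm: "\<pi> permutes ?S" and inv2: "\<forall>x\<in>?S. \<pi> (\<pi> x) = x" and fp: "\<forall>x\<in>?S. \<pi> x \<noteq> x"
    and eo: "\<forall>a\<in>?S. even a \<longrightarrow> odd (\<pi> a)"
    using assms by (auto simp: Pa_def fpf_involution_def)
  have inS: "\<And>x. x \<in> ?S \<Longrightarrow> \<pi> x \<in> ?S" using permutes_in_image[OF perm] by blast
  show "inv \<pi> = \<pi>" by (rule inv_invol[OF perm inv2])
  have k1: "\<And>i. i \<in> posset n \<Longrightarrow> \<pi> (2*i) \<in> ?S \<and> odd (\<pi> (2*i))"
    using inS eo by auto
  have k2: "\<And>i. i \<in> posset n \<Longrightarrow> ?\<rho> i \<in> posset n \<and> 2 * ?\<rho> i - 1 = \<pi> (2*i)"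
  proof -
    fix i assume i: "i \<in> posset n"
    from k1[OF i] have "1 \<le> \<pi> (2*i)" "\<pi> (2*i) \<le> 2 * int n" "odd (\<pi> (2*i))" by auto
    then show "?\<rho> i \<in> posset n \<and> 2 * ?\<rho> i - 1 = \<pi> (2*i)"
      using i odd_half[of "\<pi> (2*i)" "int n"] unfolding Fa_def by auto
  qed
  have injr: "inj_on ?\<rho> (posset n)"
  proof (rule inj_onI)
    fix i j assume ij: "i \<in> posset n" "j \<in> posset n" "?\<rho> i = ?\<rho> j"
    then have "\<pi> (2*i) = \<pi> (2*j)" using k2 by metis
    then have "\<pi> (\<pi> (2*i)) = \<pi> (\<pi> (2*j))" by simp
    then show "i = j" using inv2 ij by auto
  qed
  show permr: "?\<rho> permutes posset n"
    by (rule perm_of_inj) (use k2 injr in \<open>auto simp: Fa_def posset_def\<close>)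
  have oddimg: "\<And>j. j \<in> posset n \<Longrightarrow> \<pi> (2*j-1) = 2 * inv ?\<rho> j \<and> inv ?\<rho> j \<in> posset n"
  proof -
    fix j assume j: "j \<in> posset n"
    define m where "m = inv ?\<rho> j"
    have m: "m \<in> posset n" "?\<rho> m = j" unfolding m_def
      using permutes_in_image[OF permutes_inv[OF permr], of j] j permutes_inverses(1)[OF permr] by auto
    then have "\<pi> (2*m) = 2*j - 1" using k2 by metis
    moreover have "2*m \<in> ?S" using m(1) by auto
    ultimately have "\<pi> (2*j-1) = 2*m" using inv2 by metis
    then show "\<pi> (2*j-1) = 2 * inv ?\<rho> j \<and> inv ?\<rho> j \<in> posset n" using m m_def by auto
  qed
  show "\<forall>x\<in>?S. odd x \<longrightarrow> even (\<pi> x)"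
  proof (intro ballI impI)
    fix x assume x: "x \<in> ?S" "odd x"
    have h: "1 \<le> (x+1) div 2 \<and> (x+1) div 2 \<le> int n \<and> 2*((x+1) div 2) - 1 = x"
      by (rule odd_half) (use x in auto)
    then obtain j where "x = 2*j - 1" "j \<in> posset n" by (metis mem_posset)
    then show "even (\<pi> x)" using oddimg by auto
  qed
  have oo: "ncycles (\<pi> \<circ> long_cycle (2*n)) (odds n) = ncycles ?\<rho> (posset n)"
  proof (rule ncycles_conj[where h = "\<lambda>i. 2*i-1"])
    show "inj_on (\<lambda>i. 2*i-1) (posset n)" by (auto simp: inj_on_def)
    show "(\<lambda>i. 2*i-1) ` posset n = odds n"
    proof
      show "(\<lambda>i. 2*i-1) ` posset n \<subseteq> odds n" by (auto simp: odds_def)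
      show "odds n \<subseteq> (\<lambda>i. 2*i-1) ` posset n"
      proof
        fix x assume "x \<in> odds n"
        then have "x = 2*((x+1) div 2) - 1" "(x+1) div 2 \<in> posset n"
          using odd_half[of x "int n"] by (auto simp: odds_def)
        then show "x \<in> (\<lambda>i. 2*i-1) ` posset n" by blast
      qed
    qed
    show "\<forall>x\<in>posset n. ?\<rho> x \<in> posset n" using k2 by blast
    show "\<forall>x\<in>posset n. (\<pi> \<circ> long_cycle (2*n)) (2*x-1) = 2 * ?\<rho> x - 1"
      using k2 by (auto simp: lc_simp)
  qed
  then show "ncycles (\<pi> \<circ> long_cycle (2*n)) (odds n) = ncycles ?\<rho> (posset n)" .
  have ee: "ncycles (\<pi> \<circ> long_cycle (2*n)) (evens n) = ncycles (inv ?\<rho> \<circ> long_cycle n) (posset n)"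
  proof (rule ncycles_conj[where h = "\<lambda>i. 2*i"])
    show "inj_on (\<lambda>i. 2*i) (posset n)" by (auto simp: inj_on_def)
    show "(\<lambda>i. 2*i) ` posset n = evens n"
    proof
      show "(\<lambda>i. 2*i) ` posset n \<subseteq> evens n" by (auto simp: evens_def)
      show "evens n \<subseteq> (\<lambda>i. 2*i) ` posset n"
      proof
        fix x assume "x \<in> evens n"
        then have "x = 2*(x div 2)" "x div 2 \<in> posset n"
          using even_half[of x "int n"] by (auto simp: evens_def)
        then show "x \<in> (\<lambda>i. 2*i) ` posset n" by blast
      qed
    qed
    have lcn: "\<And>i. i \<in> posset n \<Longrightarrow> long_cycle n i \<in> posset n \<and> long_cycle (2*n) (2*i) = 2 * long_cycle n i - 1"
      by (auto simp: lc_simp)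
    show "\<forall>x\<in>posset n. (inv ?\<rho> \<circ> long_cycle n) x \<in> posset n"
      using lcn oddimg by auto
    show "\<forall>x\<in>posset n. (\<pi> \<circ> long_cycle (2*n)) (2*x) = 2 * (inv ?\<rho> \<circ> long_cycle n) x"
      using lcn oddimg by auto
  qed
  have "ncycles (\<pi> \<circ> long_cycle (2*n)) (odds n \<union> evens n) =
     ncycles (\<pi> \<circ> long_cycle (2*n)) (odds n) + ncycles (\<pi> \<circ> long_cycle (2*n)) (evens n)"
  proof (rule ncycles_Un)
    show "odds n \<inter> evens n = {}" by (auto simp: odds_def evens_def)
    show "finite (odds n)" unfolding odds_def
      by (rule finite_subset[OF _ finite_atLeastAtMost_int[of 1 "2*int n"]]) auto
    show "finite (evens n)" unfolding evens_def
      by (rule finite_subset[OF _ finite_atLeastAtMost_int[of 1 "2*int n"]]) auto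
    show "\<forall>x\<in>odds n. (\<pi> \<circ> long_cycle (2 * n)) x \<in> odds n"
    proof
      fix x assume x: "x \<in> odds n"
      have "x \<noteq> 2 * int n" using x by (auto simp: odds_def)
      with x have "long_cycle (2*n) x = x + 1" "x + 1 \<in> ?S" "even (x+1)"
        by (auto simp: odds_def lc_simp)
      then show "(\<pi> \<circ> long_cycle (2 * n)) x \<in> odds n"
        using inS eo by (auto simp: odds_def)
    qed
    show "\<forall>x\<in>evens n. (\<pi> \<circ> long_cycle (2 * n)) x \<in> evens n"
    proof
      fix x assume x: "x \<in> evens n"
      then have "long_cycle (2*n) x \<in> ?S" "odd (long_cycle (2*n) x)"
        by (auto simp: evens_def lc_simp)
      then show "(\<pi> \<circ> long_cycle (2 * n)) x \<in> evens n"
        using inS \<open>\<forall>x\<in>?S. odd x \<longrightarrow> even (\<pi> x)\<close> by (auto simp: evens_def)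
    qed
  qed
  moreover have "odds n \<union> evens n = ?S" by (auto simp: odds_def evens_def)
  ultimately show "ncycles (\<pi> \<circ> long_cycle (2*n)) ?S =
       ncycles ?\<rho> (posset n) + ncycles (inv ?\<rho> \<circ> long_cycle n) (posset n)"
    using oo ee by simp
qed


lemma B_a:
  assumes perm: "\<rho> permutes posset n"
  shows "Ga n \<rho> \<in> Pa n" "Fa n (Ga n \<rho>) = \<rho>"
proof -
  let ?S = "posset (2*n)"
  let ?\<pi> = "Ga n \<rho>"
  have rin: "\<And>i. i \<in> posset n \<Longrightarrow> \<rho> i \<in> posset n" using permutes_in_image[OF perm] by blast
  have iin: "\<And>i. i \<in> posset n \<Longrightarrow> inv \<rho> i \<in> posset n"
    using permutes_in_image[OF permutes_inv[OF perm]] by blast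
  have ev: "\<And>x. x \<in> ?S \<Longrightarrow> even x \<Longrightarrow> ?\<pi> x = 2 * \<rho> (x div 2) - 1 \<and> x div 2 \<in> posset n \<and> x = 2 * (x div 2)"
  proof -
    fix x assume x: "x \<in> ?S" "even x"
    have "1 \<le> x div 2 \<and> x div 2 \<le> int n \<and> 2*(x div 2) = x" by (rule even_half) (use x in auto)
    then show "?\<pi> x = 2 * \<rho> (x div 2) - 1 \<and> x div 2 \<in> posset n \<and> x = 2 * (x div 2)"
      using x unfolding Ga_def by auto
  qed
  have od: "\<And>x. x \<in> ?S \<Longrightarrow> odd x \<Longrightarrow> ?\<pi> x = 2 * inv \<rho> ((x+1) div 2) \<and> (x+1) div 2 \<in> posset n \<and> x = 2 * ((x+1) div 2) - 1"
  proof -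
    fix x assume x: "x \<in> ?S" "odd x"
    have "1 \<le> (x+1) div 2 \<and> (x+1) div 2 \<le> int n \<and> 2*((x+1) div 2) - 1 = x" by (rule odd_half) (use x in auto)
    then show "?\<pi> x = 2 * inv \<rho> ((x+1) div 2) \<and> (x+1) div 2 \<in> posset n \<and> x = 2 * ((x+1) div 2) - 1"
      using x unfolding Ga_def by auto
  qed
  have main: "\<And>x. x \<in> ?S \<Longrightarrow> ?\<pi> x \<in> ?S \<and> ?\<pi> (?\<pi> x) = x \<and> ?\<pi> x \<noteq> x \<and> (even x \<longrightarrow> odd (?\<pi> x))"
  proof -
    fix x assume x: "x \<in> ?S"
    show "?\<pi> x \<in> ?S \<and> ?\<pi> (?\<pi> x) = x \<and> ?\<pi> x \<noteq> x \<and> (even x \<longrightarrow> odd (?\<pi> x))"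
    proof (cases "even x")
      case True
      define i where "i = x div 2"
      have e: "?\<pi> x = 2 * \<rho> i - 1" "i \<in> posset n" "x = 2*i" using ev[OF x True] i_def by auto
      have r: "\<rho> i \<in> posset n" using rin e(2) .
      have y: "2 * \<rho> i - 1 \<in> ?S" "odd (2 * \<rho> i - 1)" using r by auto
      have "(2 * \<rho> i - 1 + 1) div 2 = \<rho> i" by simp
      then have "?\<pi> (?\<pi> x) = 2 * inv \<rho> (\<rho> i)" using od[OF y] e(1) by simp
      also have "\<dots> = x" using permutes_inverses(2)[OF perm] e(3) by simp
      finally have "?\<pi> (?\<pi> x) = x" .
      moreover have "2 * \<rho> i - 1 \<noteq> x" using e(3) by presburger
      ultimately show ?thesis using y e by auto
    next
      case False
      define i where "i = (x+1) div 2"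
      have e: "?\<pi> x = 2 * inv \<rho> i" "i \<in> posset n" "x = 2*i - 1" using od[OF x False] i_def by auto
      have r: "inv \<rho> i \<in> posset n" using iin e(2) .
      have y: "2 * inv \<rho> i \<in> ?S" "even (2 * inv \<rho> i)" using r by auto
      have "?\<pi> (?\<pi> x) = 2 * \<rho> (inv \<rho> i) - 1" using ev[OF y] e(1) by simp
      also have "\<dots> = x" using permutes_inverses(1)[OF perm] e(3) by simp
      finally have "?\<pi> (?\<pi> x) = x" .
      moreover have "2 * inv \<rho> i \<noteq> x" using e(3) by presburger
      ultimately show ?thesis using y e False by auto
    qed
  qed
  have out: "\<forall>x. x \<notin> ?S \<longrightarrow> ?\<pi> x = x" unfolding Ga_def by auto
  have "?\<pi> permutes ?S" by (rule invol_permutes) (use main out in auto)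
  then show "?\<pi> \<in> Pa n" using main unfolding Pa_def fpf_involution_def by auto
  show "Fa n ?\<pi> = \<rho>"
  proof
    fix i show "Fa n ?\<pi> i = \<rho> i"
    proof (cases "i \<in> posset n")
      case True
      then have "2*i \<in> ?S" "even (2*i)" by auto
      then have "?\<pi> (2*i) = 2 * \<rho> i - 1" using ev by simp
      then show ?thesis using True unfolding Fa_def by simp
    next
      case False
      have "Fa n ?\<pi> i = i" using False by (simp add: Fa_def del: mem_posset)
      then show ?thesis using permutes_not_in[OF perm False] by simp
    qed
  qed
qed

lemma C_a:
  assumes "\<pi> \<in> Pa n"
  shows "Ga n (Fa n \<pi>) = \<pi>"
proof
  let ?S = "posset (2*n)"
  let ?\<rho> = "Fa n \<pi>"
  have perm: "\<pi> permutes ?S" and inv2: "\<forall>x\<in>?S. \<pi> (\<pi> x) = x"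
    and eo: "\<forall>a\<in>?S. even a \<longrightarrow> odd (\<pi> a)"
    using assms by (auto simp: Pa_def fpf_involution_def)
  have inS: "\<And>x. x \<in> ?S \<Longrightarrow> \<pi> x \<in> ?S" using permutes_in_image[OF perm] by blast
  have permr: "?\<rho> permutes posset n" and oe: "\<forall>x\<in>?S. odd x \<longrightarrow> even (\<pi> x)"
    using A_a[OF assms] by auto
  fix x
  show "Ga n ?\<rho> x = \<pi> x"
  proof (cases "x \<in> ?S")
    case False
    have "Ga n ?\<rho> x = x" using False by (simp add: Ga_def del: mem_posset)
    then show ?thesis using permutes_not_in[OF perm False] by simp
  next
    case x: True
    show ?thesis
    proof (cases "even x")
      case True
      have h: "1 \<le> x div 2 \<and> x div 2 \<le> int n \<and> 2*(x div 2) = x" by (rule even_half) (use x True in auto)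
      have y: "\<pi> x \<in> ?S" "odd (\<pi> x)" using inS x eo True by auto
      have "1 \<le> (\<pi> x + 1) div 2 \<and> (\<pi> x + 1) div 2 \<le> int n \<and> 2*((\<pi> x+1) div 2) - 1 = \<pi> x"
        by (rule odd_half) (use y in auto)
      then show ?thesis using h x True unfolding Ga_def Fa_def by auto
    next
      case False
      have h: "1 \<le> (x+1) div 2 \<and> (x+1) div 2 \<le> int n \<and> 2*((x+1) div 2) - 1 = x"
        by (rule odd_half) (use x False in auto)
      have y: "\<pi> x \<in> ?S" "even (\<pi> x)" using inS x oe False by auto
      have h2: "1 \<le> \<pi> x div 2 \<and> \<pi> x div 2 \<le> int n \<and> 2*(\<pi> x div 2) = \<pi> x"
        by (rule even_half) (use y in auto)
      have "?\<rho> (\<pi> x div 2) = (\<pi> (\<pi> x) + 1) div 2" using h2 unfolding Fa_def by simp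
      also have "\<dots> = (x+1) div 2" using inv2 x by simp
      finally have "inv ?\<rho> ((x+1) div 2) = \<pi> x div 2"
        using permutes_inv_eq[OF permr] by blast
      then show ?thesis using h2 x False unfolding Ga_def by simp
    qed
  qed
qed

lemma part_a: "\<exists>f. bij_betw f (a_tilde g p n) (a_hat g p n)"
proof
  show "bij_betw (Fa n) (a_tilde g p n) (a_hat g p n)"
  proof (rule bij_betw_byWitness[where f' = "Ga n"])
    have aP: "\<And>\<pi>. \<pi> \<in> a_tilde g p n \<Longrightarrow> \<pi> \<in> Pa n" unfolding a_tilde_def Pa_def by auto
    have aE: "\<And>\<pi>. \<pi> \<in> Pa n \<Longrightarrow> \<pi> \<in> a_tilde g p n \<longleftrightarrow> Fa n \<pi> \<in> a_hat g p n"
    proof -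
      fix \<pi> assume P: "\<pi> \<in> Pa n"
      note A = A_a[OF P]
      show "\<pi> \<in> a_tilde g p n \<longleftrightarrow> Fa n \<pi> \<in> a_hat g p n"
        using P A unfolding a_tilde_def a_hat_def Pa_def odds_def by auto
    qed
    show "\<forall>a\<in>a_tilde g p n. Ga n (Fa n a) = a" using C_a aP by blast
    show "\<forall>a'\<in>a_hat g p n. Fa n (Ga n a') = a'" using B_a unfolding a_hat_def by blast
    show "Fa n ` a_tilde g p n \<subseteq> a_hat g p n" using aE aP by blast
    show "Ga n ` a_hat g p n \<subseteq> a_tilde g p n"
    proof
      fix \<pi> assume "\<pi> \<in> Ga n ` a_hat g p n"
      then obtain \<rho> where r: "\<rho> \<in> a_hat g p n" "\<pi> = Ga n \<rho>" by auto
      then have "\<rho> permutes posset n" unfolding a_hat_def by auto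
      then show "\<pi> \<in> a_tilde g p n" using B_a aE r by metis
    qed
  qed
qed



lemma mem_W[simp]: "x \<in> Wset n \<longleftrightarrow> (1 \<le> x \<and> x \<le> 2*int n \<and> even x) \<or> (-2*int n \<le> x \<and> x \<le> -1 \<and> odd x)"
  by (auto simp: Wset_def)
lemma mem_B[simp]: "x \<in> Bset n \<longleftrightarrow> (1 \<le> x \<and> x \<le> 2*int n \<and> odd x) \<or> (-2*int n \<le> x \<and> x \<le> -1 \<and> even x)"
  by (auto simp: Bset_def)

definition phi :: "nat \<Rightarrow> int \<Rightarrow> int" where
  "phi n w = (if w > 0 then int n + 1 - w div 2 else -(int n + 1 - (1 - w) div 2))"
definition psi :: "nat \<Rightarrow> int \<Rightarrow> int" where
  "psi n y = (if y > 0 then 2*int n + 2 - 2*y else -(2*int n + 1 + 2*y))"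

lemma tau2_simp: "tau2 (2*n) x = (if -2*int n \<le> x \<and> x \<le> -1 then (if - x < 2*int n then - x + 1 else 1)
                 else if 1 \<le> x \<and> x \<le> 2*int n then (if x = 1 then - 2*int n else - (x - 1))
                 else x)"
  by (auto simp: tau2_def)

lemma P1: "y \<in> pmset n \<Longrightarrow> psi n y \<in> Wset n \<and> phi n (psi n y) = y"
  unfolding psi_def phi_def by auto

lemma P2: "w \<in> Wset n \<Longrightarrow> phi n w \<in> pmset n \<and> psi n (phi n w) = w"
  unfolding psi_def phi_def by auto

lemma P3: "tau2 (2*n) (tau2 (2*n) x) = x"
  unfolding tau2_simp by auto

lemma P3W: "w \<in> Wset n \<Longrightarrow> tau2 (2*n) w \<in> Wset n \<and> (tau2 (2*n) w > 0 \<longleftrightarrow> w < 0)"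
  unfolding tau2_simp by auto presburger+

lemma P3B: "w \<in> Bset n \<Longrightarrow> tau2 (2*n) w \<in> Bset n"
  unfolding tau2_simp by auto

lemma P4: "y \<in> pmset n \<Longrightarrow> psi n (-y) = tau2 (2*n) (psi n y)"
  unfolding tau2_simp psi_def by auto presburger+

lemma P5: "x \<in> Wset n \<Longrightarrow> -x \<in> Bset n" "x \<in> Bset n \<Longrightarrow> -x \<in> Wset n"
  "x \<in> Wset n \<Longrightarrow> x \<notin> Bset n" "Wset n \<union> Bset n = pmset (2*n)"
  "Wset n \<subseteq> pmset (2*n)" "Bset n \<subseteq> pmset (2*n)"
  by auto

lemma P7: "u \<in> pmset n \<Longrightarrow> tau2 (2*n) (-(tau2 (2*n) (psi n u))) = - psi n (long_cycle_pm n u)"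
  unfolding tau2_simp psi_def long_cycle_pm_def lc_simp by auto

lemma P8: "y \<in> pmset n \<Longrightarrow> (psi n y > 0 \<longleftrightarrow> y > 0)" "w \<in> Wset n \<Longrightarrow> (phi n w > 0 \<longleftrightarrow> w > 0)"
  unfolding psi_def phi_def by auto



definition Fb :: "nat \<Rightarrow> (int\<Rightarrow>int) \<Rightarrow> int \<Rightarrow> int" where
  "Fb n \<tau> = (\<lambda>y. if y \<in> pmset n then phi n (tau2 (2*n) (\<tau> (psi n y))) else y)"
definition Gb :: "nat \<Rightarrow> (int\<Rightarrow>int) \<Rightarrow> int \<Rightarrow> int" where
  "Gb n t = (\<lambda>x. if x \<in> Wset n then tau2 (2*n) (psi n (t (phi n x)))
      else if x \<in> Bset n then - tau2 (2*n) (psi n (t (phi n (-x)))) else x)"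
definition Qb :: "nat \<Rightarrow> (int\<Rightarrow>int) set" where
  "Qb n = {\<tau>. fpf_involution \<tau> (pmset (2*n)) \<and> tau0 (2*n) \<circ> \<tau> = \<tau> \<circ> tau0 (2*n) \<and> \<tau> ` Bset n \<subseteq> Bset n}"

lemma P9: "v \<in> Wset n \<Longrightarrow> phi n (tau2 (2*n) v) = - phi n v"
proof -
  assume v: "v \<in> Wset n"
  have y: "phi n v \<in> pmset n" "psi n (phi n v) = v" using P2[OF v] by auto
  have "-phi n v \<in> pmset n" using y(1) by auto
  then have "phi n (psi n (- phi n v)) = - phi n v" using P1 by blast
  moreover have "psi n (- phi n v) = tau2 (2*n) v" using P4[OF y(1)] y(2) by simp
  ultimately show ?thesis by simp
qed

lemma lcpm_in: "u \<in> pmset n \<Longrightarrow> long_cycle_pm n u \<in> pmset n"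
  unfolding long_cycle_pm_def lc_simp by auto

lemma tau0_simp: "tau0 m x = (if x \<in> pmset m then - x else x)"
  by (simp add: tau0_def)

lemma finite_pmset: "finite (pmset m)"
  by (simp add: pmset_def posset_def negset_def)

lemma Qb_facts:
  assumes "\<tau> \<in> Qb n"
  shows "\<tau> permutes pmset (2*n)" "\<And>x. x \<in> pmset (2*n) \<Longrightarrow> \<tau> (\<tau> x) = x"
    "\<And>x. x \<in> pmset (2*n) \<Longrightarrow> \<tau> x \<noteq> x"
    "\<And>x. x \<in> pmset (2*n) \<Longrightarrow> \<tau> (-x) = - \<tau> x"
    "\<And>x. x \<in> Wset n \<Longrightarrow> \<tau> x \<in> Wset n"
    "\<And>x. x \<in> Bset n \<Longrightarrow> \<tau> x \<in> Bset n"
    "\<And>x. x \<in> pmset (2*n) \<Longrightarrow> \<tau> x \<in> pmset (2*n)"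
proof -
  show perm: "\<tau> permutes pmset (2*n)" using assms by (simp add: Qb_def fpf_involution_def)
  show "\<And>x. x \<in> pmset (2*n) \<Longrightarrow> \<tau> (\<tau> x) = x" "\<And>x. x \<in> pmset (2*n) \<Longrightarrow> \<tau> x \<noteq> x"
    using assms unfolding Qb_def fpf_involution_def by blast+
  show inS: "\<And>x. x \<in> pmset (2*n) \<Longrightarrow> \<tau> x \<in> pmset (2*n)"
    using permutes_in_image[OF perm] by blast
  have com: "tau0 (2*n) \<circ> \<tau> = \<tau> \<circ> tau0 (2*n)" using assms by (simp add: Qb_def)
  show neg: "\<And>x. x \<in> pmset (2*n) \<Longrightarrow> \<tau> (-x) = - \<tau> x"
  proof -
    fix x assume x: "x \<in> pmset (2*n)"
    have "tau0 (2*n) (\<tau> x) = \<tau> (tau0 (2*n) x)" using com by (metis comp_apply)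
    then show "\<tau> (-x) = - \<tau> x" using x inS[OF x] unfolding tau0_simp by (simp del: mem_pmset)
  qed
  show B: "\<And>x. x \<in> Bset n \<Longrightarrow> \<tau> x \<in> Bset n" using assms by (auto simp: Qb_def simp del: mem_B)
  show "\<And>x. x \<in> Wset n \<Longrightarrow> \<tau> x \<in> Wset n"
  proof -
    fix x assume x: "x \<in> Wset n"
    have "\<tau> (-x) \<in> Bset n" using B P5(1)[OF x] by blast
    moreover have "\<tau> (-x) = - \<tau> x" using neg P5(5) x by blast
    ultimately show "\<tau> x \<in> Wset n" using P5(2) by fastforce
  qed
qed


lemma A_b:
  assumes Q: "\<tau> \<in> Qb n"
  shows "Fb n \<tau> permutes pmset n"
    "tau0 n \<circ> Fb n \<tau> \<circ> tau0 n = inv (Fb n \<tau>)"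
    "fpf_on (tau0 n \<circ> Fb n \<tau>) (pmset n)"
    "ncycles (Fb n \<tau>) (pmset n) = ncycles (tau2 (2*n) \<circ> \<tau>) (Wset n)"
    "ncycles (long_cycle_pm n \<circ> Fb n \<tau>) (pmset n) = ncycles (tau2 (2*n) \<circ> \<tau>) (Bset n)"
    "ncycles (tau2 (2*n) \<circ> \<tau>) (pmset (2*n)) = ncycles (tau2 (2*n) \<circ> \<tau>) (Wset n) + ncycles (tau2 (2*n) \<circ> \<tau>) (Bset n)"
    "(\<exists>a\<in>posset (2*n). \<tau> a \<in> posset (2*n)) \<longleftrightarrow> (\<exists>a\<in>posset n. Fb n \<tau> a \<in> negset n)"
    "fpf_on (tau0 (2*n) \<circ> \<tau>) (pmset (2*n))"
proof -
  let ?T = "tau2 (2*n)"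
  let ?t = "Fb n \<tau>"
  note F = Qb_facts[OF Q]
  have tdef: "\<And>y. y \<in> pmset n \<Longrightarrow> ?t y = phi n (?T (\<tau> (psi n y)))" by (simp add: Fb_def del: mem_pmset)
  have tout: "\<And>y. y \<notin> pmset n \<Longrightarrow> ?t y = y" by (simp add: Fb_def del: mem_pmset)
  have inW: "\<And>y. y \<in> pmset n \<Longrightarrow> ?T (\<tau> (psi n y)) \<in> Wset n"
    using P1 F(5) P3W by blast
  have tin: "\<And>y. y \<in> pmset n \<Longrightarrow> ?t y \<in> pmset n" using inW P2 tdef by metis
  have key: "\<And>y. y \<in> pmset n \<Longrightarrow> psi n (?t y) = ?T (\<tau> (psi n y))" using inW P2 tdef by metis
  have injt: "inj_on ?t (pmset n)"
  proof (rule inj_onI)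
    fix y1 y2 assume y: "y1 \<in> pmset n" "y2 \<in> pmset n" "?t y1 = ?t y2"
    then have "?T (\<tau> (psi n y1)) = ?T (\<tau> (psi n y2))" using key by metis
    then have "\<tau> (\<tau> (psi n y1)) = \<tau> (\<tau> (psi n y2))" using P3 by metis
    moreover have "psi n y1 \<in> pmset (2*n)" "psi n y2 \<in> pmset (2*n)" using y P1 P5(5) by blast+
    ultimately have "psi n y1 = psi n y2" using F(2) by metis
    then show "y1 = y2" using y P1 by metis
  qed
  show permt: "?t permutes pmset n"
    by (rule perm_of_inj[OF finite_pmset]) (use tin injt tout in auto)
  show "tau0 n \<circ> ?t \<circ> tau0 n = inv ?t"
  proof
    fix x
    show "(tau0 n \<circ> ?t \<circ> tau0 n) x = inv ?t x"
    proof (cases "x \<in> pmset n")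
      case False
      have "inv ?t x = x" using permutes_inv_eq[OF permt] tout[OF False] by blast
      then show ?thesis using False tout[OF False] unfolding tau0_simp by (simp del: mem_pmset)
    next
      case True
      define w where "w = psi n x"
      have w: "w \<in> Wset n" "phi n w = x" using P1[OF True] w_def by auto
      have mx: "-x \<in> pmset n" using True by auto
      have Tw: "?T w \<in> Wset n" using P3W w(1) by blast
      have tauTw: "\<tau> (?T w) \<in> Wset n" using F(5) Tw by blast
      define v where "v = ?T (\<tau> (?T w))"
      have v: "v \<in> Wset n" using P3W tauTw v_def by blast
      have "?t (-x) = phi n v" using tdef[OF mx] P4[OF True] w_def v_def by simp
      then have e1: "- ?t (-x) = phi n (\<tau> (?T w))" using P9[OF v] v_def P3 by simp
      have "?t (phi n (\<tau> (?T w))) = phi n (?T (\<tau> (\<tau> (?T w))))"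
        using tdef P2[OF tauTw] by metis
      also have "\<dots> = x" using F(2) Tw P5(5) P3 w by auto
      finally have "?t (- ?t (-x)) = x" using e1 by simp
      moreover have "?t (-x) \<in> pmset n" using tin mx by blast
      moreover have "inv ?t x = - ?t (-x)" using permutes_inv_eq[OF permt] calculation(1) by blast
      ultimately show ?thesis using True mx unfolding tau0_simp
        by (simp del: mem_pmset)
    qed
  qed
  show "fpf_on (tau0 n \<circ> ?t) (pmset n)"
    unfolding fpf_on_def
  proof
    fix y assume y: "y \<in> pmset n"
    show "(tau0 n \<circ> ?t) y \<noteq> y"
    proof
      assume "(tau0 n \<circ> ?t) y = y"
      then have "?t y = -y" using tin[OF y] unfolding tau0_simp by (simp del: mem_pmset)
      then have "?T (\<tau> (psi n y)) = ?T (psi n y)" using key[OF y] P4[OF y] by simp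
      then have "\<tau> (psi n y) = psi n y" using P3 by metis
      then show False using F(3) P1[OF y] P5(5) by blast
    qed
  qed
  show "ncycles ?t (pmset n) = ncycles (?T \<circ> \<tau>) (Wset n)"
  proof (rule ncycles_conj[symmetric])
    show "inj_on (psi n) (pmset n)" using P1 by (metis inj_onI)
    show "psi n ` pmset n = Wset n"
    proof
      show "psi n ` pmset n \<subseteq> Wset n"
      proof (rule image_subsetI)
        fix y assume "y \<in> pmset n" then show "psi n y \<in> Wset n" using P1 by blast
      qed
      show "Wset n \<subseteq> psi n ` pmset n"
      proof
        fix w assume w: "w \<in> Wset n"
        have "phi n w \<in> pmset n" "w = psi n (phi n w)" using P2[OF w] by simp_all
        then show "w \<in> psi n ` pmset n" by blast
      qed
    qed
    show "\<forall>x\<in>pmset n. ?t x \<in> pmset n" using tin by blast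
    show "\<forall>x\<in>pmset n. (?T \<circ> \<tau>) (psi n x) = psi n (?t x)" using key by simp
  qed
  show "ncycles (long_cycle_pm n \<circ> ?t) (pmset n) = ncycles (?T \<circ> \<tau>) (Bset n)"
  proof (rule ncycles_conj[symmetric, where h = "\<lambda>y. - psi n y"])
    show "inj_on (\<lambda>y. - psi n y) (pmset n)"
    proof (rule inj_onI)
      fix y1 y2 assume y: "y1 \<in> pmset n" "y2 \<in> pmset n" "- psi n y1 = - psi n y2"
      then have "phi n (psi n y1) = phi n (psi n y2)" by simp
      then show "y1 = y2" using P1[OF y(1)] P1[OF y(2)] by simp
    qed
    show "(\<lambda>y. - psi n y) ` pmset n = Bset n"
    proof
      show "(\<lambda>y. - psi n y) ` pmset n \<subseteq> Bset n" using P1 P5(1) by blast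
      show "Bset n \<subseteq> (\<lambda>y. - psi n y) ` pmset n"
      proof
        fix b assume b: "b \<in> Bset n"
        then have "-b \<in> Wset n" by (rule P5(2))
        then have "phi n (-b) \<in> pmset n" "b = - psi n (phi n (-b))" using P2 by auto
        then show "b \<in> (\<lambda>y. - psi n y) ` pmset n" by blast
      qed
    qed
    show "\<forall>x\<in>pmset n. (long_cycle_pm n \<circ> ?t) x \<in> pmset n" using tin lcpm_in by auto
    show "\<forall>x\<in>pmset n. (?T \<circ> \<tau>) (- psi n x) = - psi n ((long_cycle_pm n \<circ> ?t) x)"
    proof
      fix x assume x: "x \<in> pmset n"
      have "psi n x \<in> pmset (2*n)" using P1[OF x] P5(5) by blast
      then have "\<tau> (- psi n x) = - \<tau> (psi n x)" using F(4) by blast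
      also have "\<tau> (psi n x) = ?T (psi n (?t x))" using key[OF x] P3 by metis
      finally have "(?T \<circ> \<tau>) (- psi n x) = ?T (- ?T (psi n (?t x)))" by simp
      also have "\<dots> = - psi n (long_cycle_pm n (?t x))" using P7 tin[OF x] by blast
      finally show "(?T \<circ> \<tau>) (- psi n x) = - psi n ((long_cycle_pm n \<circ> ?t) x)" by simp
    qed
  qed
  have "ncycles (?T \<circ> \<tau>) (Wset n \<union> Bset n) = ncycles (?T \<circ> \<tau>) (Wset n) + ncycles (?T \<circ> \<tau>) (Bset n)"
  proof (rule ncycles_Un)
    show "Wset n \<inter> Bset n = {}" using P5(3) by (auto simp del: mem_W mem_B)
    show "\<forall>x\<in>Wset n. (?T \<circ> \<tau>) x \<in> Wset n"
    proof
      fix x assume x: "x \<in> Wset n" show "(?T \<circ> \<tau>) x \<in> Wset n"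
        unfolding comp_apply using P3W[OF F(5)[OF x]] by blast
    qed
    show "\<forall>x\<in>Bset n. (?T \<circ> \<tau>) x \<in> Bset n"
    proof
      fix x assume x: "x \<in> Bset n" show "(?T \<circ> \<tau>) x \<in> Bset n"
        unfolding comp_apply using P3B[OF F(6)[OF x]] by blast
    qed
    show "finite (Wset n)" by (rule finite_subset[OF P5(5) finite_pmset])
    show "finite (Bset n)" by (rule finite_subset[OF P5(6) finite_pmset])
  qed
  then show "ncycles (?T \<circ> \<tau>) (pmset (2*n)) = ncycles (?T \<circ> \<tau>) (Wset n) + ncycles (?T \<circ> \<tau>) (Bset n)"
    using P5(4) by simp
  show "fpf_on (tau0 (2*n) \<circ> \<tau>) (pmset (2*n))"
    unfolding fpf_on_def
  proof
    fix x assume x: "x \<in> pmset (2*n)"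
    show "(tau0 (2*n) \<circ> \<tau>) x \<noteq> x"
    proof
      assume "(tau0 (2*n) \<circ> \<tau>) x = x"
      then have e: "\<tau> x = -x" using F(7)[OF x] unfolding tau0_simp by (simp del: mem_pmset)
      have "x \<in> Wset n \<or> x \<in> Bset n" using x P5(4) by blast
      then show False
      proof
        assume "x \<in> Wset n" then show False using e F(5) P5(1) P5(3) by metis
      next
        assume xb: "x \<in> Bset n" then have "-x \<in> Wset n" by (rule P5(2))
        then show False using e F(6) xb P5(3) by metis
      qed
    qed
  qed
  show "(\<exists>a\<in>posset (2*n). \<tau> a \<in> posset (2*n)) \<longleftrightarrow> (\<exists>a\<in>posset n. ?t a \<in> negset n)"
  proof
    assume "\<exists>a\<in>posset (2*n). \<tau> a \<in> posset (2*n)"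
    then obtain a where a: "a \<in> posset (2*n)" "\<tau> a \<in> posset (2*n)" by blast
    show "\<exists>a\<in>posset n. ?t a \<in> negset n"
    proof (rule ccontr)
      assume nc: "\<not> (\<exists>a\<in>posset n. ?t a \<in> negset n)"
      have pp: "\<And>b. b \<in> posset n \<Longrightarrow> ?t b \<in> posset n"
      proof -
        fix b assume "b \<in> posset n"
        then have "b \<in> pmset n" "?t b \<notin> negset n" using nc by (auto simp: pmset_def simp del: mem_negset mem_posset mem_pmset)
        then show "?t b \<in> posset n" using tin unfolding pmset_def by blast
      qed
      have injp: "inj_on ?t (posset n)" by (rule inj_on_subset[OF injt]) (auto simp: pmset_def simp del: mem_posset mem_pmset)
      have surj: "?t ` posset n = posset n"
        by (rule endo_inj_surj[OF _ _ injp]) (use pp in \<open>auto simp: posset_def simp del: mem_posset\<close>)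
      have "\<exists>y. y \<in> pmset n \<and> y < 0 \<and> ?t y > 0"
      proof (cases "even a")
        case True
        then have aW: "a \<in> Wset n" using a by auto
        define y where "y = phi n a"
        have y: "y \<in> pmset n" "psi n y = a" "y > 0" using P2[OF aW] P8(2)[OF aW] a y_def by auto
        have ta: "\<tau> a \<in> Wset n" "\<tau> a > 0" using F(5)[OF aW] a by auto
        have Tt: "?T (\<tau> a) \<in> Wset n" "?T (\<tau> a) < 0" using P3W[OF ta(1)] ta(2) by auto
        have "?t y = phi n (?T (\<tau> a))" using tdef[OF y(1)] y(2) by simp
        moreover have "phi n (?T (\<tau> a)) \<in> pmset n" using P2[OF Tt(1)] by blast
        moreover have "\<not> phi n (?T (\<tau> a)) > 0" using P8(2)[OF Tt(1)] Tt(2) by simp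
        ultimately have "?t y < 0" by auto
        then have False using nc y tin[OF y(1)] by auto
        then show ?thesis by blast
      next
        case False
        then have aB: "a \<in> Bset n" using a by auto
        have maW: "-a \<in> Wset n" using P5(2)[OF aB] .
        define y where "y = phi n (-a)"
        have y: "y \<in> pmset n" "psi n y = -a" "y < 0" using P2[OF maW] P8(2)[OF maW] a y_def by auto
        have "\<tau> (-a) = - \<tau> a" using F(4) a by auto
        then have ta: "\<tau> (-a) \<in> Wset n" "\<tau> (-a) < 0" using F(5)[OF maW] a by auto
        have "?T (\<tau> (-a)) \<in> Wset n" "?T (\<tau> (-a)) > 0" using P3W[OF ta(1)] ta(2) by auto
        then have "?t y > 0" using tdef[OF y(1)] y(2) P8(2) by metis
        then show ?thesis using y by blast
      qed
      then obtain y where y: "y \<in> pmset n" "y < 0" "?t y > 0" by blast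
      then have "?t y \<in> posset n" using tin[OF y(1)] by auto
      then obtain b where "b \<in> posset n" "?t b = ?t y" using surj by (metis imageE)
      moreover have "b \<in> pmset n" using \<open>b \<in> posset n\<close> by auto
      ultimately have "b = y" using injt y(1) by (meson inj_onD)
      then show False using \<open>b \<in> posset n\<close> y(2) by auto
    qed
  next
    assume "\<exists>a\<in>posset n. ?t a \<in> negset n"
    then obtain a where a: "a \<in> posset n" "?t a \<in> negset n" by blast
    have am: "a \<in> pmset n" using a by auto
    define w where "w = psi n a"
    have w: "w \<in> Wset n" "w > 0" using P1[OF am] P8(1)[OF am] a w_def by auto
    have tw: "\<tau> w \<in> Wset n" using F(5) w(1) by blast
    have Ttw: "?T (\<tau> w) \<in> Wset n" using P3W tw by blast
    have "phi n (?T (\<tau> w)) < 0" using tdef[OF am] a w_def by auto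
    moreover have "?T (\<tau> w) \<noteq> 0" using Ttw by auto
    ultimately have "?T (\<tau> w) < 0" using P8(2)[OF Ttw] by auto
    moreover have "\<tau> w \<noteq> 0" using tw by auto
    ultimately have "\<tau> w > 0" using P3W[OF tw] by auto
    then have "\<tau> w \<in> posset (2*n)" "w \<in> posset (2*n)" using tw w by auto
    then show "\<exists>a\<in>posset (2*n). \<tau> a \<in> posset (2*n)" by blast
  qed
qed


lemma B_b:
  assumes permt: "t permutes pmset n" and sym: "tau0 n \<circ> t \<circ> tau0 n = inv t"
    and fpf: "fpf_on (tau0 n \<circ> t) (pmset n)"
  shows "Gb n t \<in> Qb n" "Fb n (Gb n t) = t"
proof -
  let ?T = "tau2 (2*n)"
  let ?\<tau> = "Gb n t"
  have tin: "\<And>y. y \<in> pmset n \<Longrightarrow> t y \<in> pmset n" using permutes_in_image[OF permt] by blast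
  have tt: "\<And>y. y \<in> pmset n \<Longrightarrow> t (- t y) = - y"
  proof -
    fix y assume y: "y \<in> pmset n"
    have my: "-y \<in> pmset n" using y by auto
    have "(tau0 n \<circ> t \<circ> tau0 n) (t y) = inv t (t y)" using sym by simp
    also have "\<dots> = y" using permutes_inverses(2)[OF permt] by simp
    moreover have m: "- t y \<in> pmset n" using tin[OF y] by auto
    moreover have "t (- t y) \<in> pmset n" using tin[OF m] .
    ultimately have "- t (- t y) = y" using tin[OF y] unfolding tau0_simp
      by (simp del: mem_pmset)
    then show "t (- t y) = - y" by simp
  qed
  have nfp: "\<And>y. y \<in> pmset n \<Longrightarrow> t y \<noteq> - y"
  proof
    fix y assume y: "y \<in> pmset n" and e: "t y = - y"
    have "(tau0 n \<circ> t) y \<noteq> y" using fpf y unfolding fpf_on_def by blast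
    then show False using e tin[OF y] unfolding tau0_simp by (simp del: mem_pmset)
  qed
  have gW: "\<And>x. x \<in> Wset n \<Longrightarrow> ?\<tau> x = ?T (psi n (t (phi n x)))" by (simp add: Gb_def del: mem_W mem_B)
  have gB: "\<And>x. x \<in> Bset n \<Longrightarrow> ?\<tau> x = - ?\<tau> (-x)"
  proof -
    fix x assume x: "x \<in> Bset n"
    have "x \<notin> Wset n" using x P5(3) by blast
    then have "?\<tau> x = - ?T (psi n (t (phi n (-x))))" using x by (simp add: Gb_def del: mem_W mem_B)
    then show "?\<tau> x = - ?\<tau> (-x)" using gW[OF P5(2)[OF x]] by simp
  qed
  have gout: "\<And>x. x \<notin> pmset (2*n) \<Longrightarrow> ?\<tau> x = x"
  proof -
    fix x assume x: "x \<notin> pmset (2*n)"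
    then have "x \<notin> Wset n" "x \<notin> Bset n" using P5(5,6) by blast+
    then show "?\<tau> x = x" by (simp add: Gb_def del: mem_W mem_B)
  qed
  have Wfacts: "\<And>x. x \<in> Wset n \<Longrightarrow> ?\<tau> x \<in> Wset n \<and> ?\<tau> (?\<tau> x) = x \<and> ?\<tau> x \<noteq> x"
  proof -
    fix x assume x: "x \<in> Wset n"
    define y where "y = phi n x"
    have y: "y \<in> pmset n" "psi n y = x" using P2[OF x] y_def by auto
    have ty: "t y \<in> pmset n" using tin[OF y(1)] .
    have pty: "psi n (t y) \<in> Wset n" using P1[OF ty] by blast
    have tx: "?\<tau> x = ?T (psi n (t y))" using gW[OF x] y_def by simp
    have txW: "?\<tau> x \<in> Wset n" using tx P3W[OF pty] by simp
    have "phi n (?\<tau> x) = - t y" using tx P9[OF pty] P1[OF ty] by simp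
    then have "?\<tau> (?\<tau> x) = ?T (psi n (t (- t y)))" using gW[OF txW] by simp
    also have "\<dots> = ?T (psi n (- y))" using tt[OF y(1)] by simp
    also have "\<dots> = x" using P4[OF y(1)] y(2) P3 by simp
    finally have inv2: "?\<tau> (?\<tau> x) = x" .
    have "?\<tau> x \<noteq> x"
    proof
      assume "?\<tau> x = x"
      then have "psi n (t y) = ?T x" using tx P3 by metis
      also have "\<dots> = psi n (-y)" using P4[OF y(1)] y(2) by simp
      finally have "phi n (psi n (t y)) = phi n (psi n (-y))" by simp
      moreover have "-y \<in> pmset n" using y(1) by auto
      ultimately have "t y = -y" using P1 ty by metis
      then show False using nfp[OF y(1)] by simp
    qed
    then show "?\<tau> x \<in> Wset n \<and> ?\<tau> (?\<tau> x) = x \<and> ?\<tau> x \<noteq> x" using txW inv2 by simp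
  qed
  have Bfacts: "\<And>x. x \<in> Bset n \<Longrightarrow> ?\<tau> x \<in> Bset n \<and> ?\<tau> (?\<tau> x) = x \<and> ?\<tau> x \<noteq> x"
  proof -
    fix x assume x: "x \<in> Bset n"
    have mx: "-x \<in> Wset n" using P5(2)[OF x] .
    note W = Wfacts[OF mx]
    have tx: "?\<tau> x = - ?\<tau> (-x)" using gB[OF x] .
    have txB: "?\<tau> x \<in> Bset n" using tx P5(1)[of "?\<tau> (-x)"] W by simp
    have "?\<tau> (?\<tau> x) = - ?\<tau> (?\<tau> (-x))" using gB[OF txB] tx by simp
    also have "\<dots> = x" using W by simp
    finally have "?\<tau> (?\<tau> x) = x" .
    moreover have "?\<tau> x \<noteq> x" using tx W by auto
    ultimately show "?\<tau> x \<in> Bset n \<and> ?\<tau> (?\<tau> x) = x \<and> ?\<tau> x \<noteq> x" using txB by simp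
  qed
  have all: "\<And>x. x \<in> pmset (2*n) \<Longrightarrow> ?\<tau> x \<in> pmset (2*n) \<and> ?\<tau> (?\<tau> x) = x \<and> ?\<tau> x \<noteq> x"
  proof -
    fix x assume "x \<in> pmset (2*n)"
    then have "x \<in> Wset n \<or> x \<in> Bset n" using P5(4) by blast
    then show "?\<tau> x \<in> pmset (2*n) \<and> ?\<tau> (?\<tau> x) = x \<and> ?\<tau> x \<noteq> x"
      using Wfacts Bfacts P5(5,6) by blast
  qed
  have perm: "?\<tau> permutes pmset (2*n)" by (rule invol_permutes) (use all gout in blast)+
  have com: "tau0 (2*n) \<circ> ?\<tau> = ?\<tau> \<circ> tau0 (2*n)"
  proof
    fix x show "(tau0 (2*n) \<circ> ?\<tau>) x = (?\<tau> \<circ> tau0 (2*n)) x"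
    proof (cases "x \<in> pmset (2*n)")
      case False
      then show ?thesis using gout[OF False] unfolding tau0_simp by (simp del: mem_pmset)
    next
      case True
      have "?\<tau> (-x) = - ?\<tau> x"
      proof (cases "x \<in> Wset n")
        case xw: True
        show ?thesis using gB[OF P5(1)[OF xw]] by simp
      next
        case False
        then have "x \<in> Bset n" using True P5(4) by blast
        then show ?thesis using gB by simp
      qed
      then show ?thesis using True all[OF True] unfolding tau0_simp by (simp del: mem_pmset)
    qed
  qed
  have Binv: "?\<tau> ` Bset n \<subseteq> Bset n" using Bfacts by blast
  show "?\<tau> \<in> Qb n" unfolding Qb_def fpf_involution_def using perm com Binv all by blast
  show "Fb n ?\<tau> = t"
  proof
    fix y show "Fb n ?\<tau> y = t y"
    proof (cases "y \<in> pmset n")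
      case False
      then show ?thesis using permutes_not_in[OF permt False] by (simp add: Fb_def del: mem_pmset)
    next
      case True
      have w: "psi n y \<in> Wset n" "phi n (psi n y) = y" using P1[OF True] by auto
      have "Fb n ?\<tau> y = phi n (?T (?\<tau> (psi n y)))" using True by (simp add: Fb_def del: mem_pmset)
      also have "\<dots> = phi n (psi n (t y))" using gW[OF w(1)] w(2) P3 by simp
      also have "\<dots> = t y" using P1[OF tin[OF True]] by simp
      finally show ?thesis .
    qed
  qed
qed

lemma C_b:
  assumes Q: "\<tau> \<in> Qb n"
  shows "Gb n (Fb n \<tau>) = \<tau>"
proof
  let ?T = "tau2 (2*n)"
  let ?t = "Fb n \<tau>"
  note F = Qb_facts[OF Q]
  have tdef: "\<And>y. y \<in> pmset n \<Longrightarrow> ?t y = phi n (?T (\<tau> (psi n y)))" by (simp add: Fb_def del: mem_pmset)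
  have Wc: "\<And>x. x \<in> Wset n \<Longrightarrow> Gb n ?t x = \<tau> x"
  proof -
    fix x assume x: "x \<in> Wset n"
    have p: "phi n x \<in> pmset n" "psi n (phi n x) = x" using P2[OF x] by auto
    have TW: "?T (\<tau> x) \<in> Wset n" using P3W F(5)[OF x] by blast
    have "Gb n ?t x = ?T (psi n (?t (phi n x)))" using x by (simp add: Gb_def del: mem_W mem_B)
    also have "\<dots> = ?T (psi n (phi n (?T (\<tau> x))))" using tdef[OF p(1)] p(2) by simp
    also have "\<dots> = \<tau> x" using P2[OF TW] P3 by simp
    finally show "Gb n ?t x = \<tau> x" .
  qed
  fix x show "Gb n ?t x = \<tau> x"
  proof (cases "x \<in> Wset n")
    case True then show ?thesis using Wc by blast
  next
    case nW: False
    show ?thesis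
    proof (cases "x \<in> Bset n")
      case True
      have mx: "-x \<in> Wset n" using P5(2)[OF True] .
      have "Gb n ?t x = - ?T (psi n (?t (phi n (-x))))" using True nW by (simp add: Gb_def del: mem_W mem_B)
      also have "\<dots> = - Gb n ?t (-x)" using mx by (simp add: Gb_def del: mem_W mem_B)
      also have "\<dots> = - \<tau> (-x)" using Wc[OF mx] by simp
      also have "\<dots> = \<tau> x" using F(4)[of x] True P5(6) by auto
      finally show ?thesis .
    next
      case False
      then have "x \<notin> pmset (2*n)" using nW P5(4) by blast
      then show ?thesis using nW False permutes_not_in[OF F(1)] by (simp add: Gb_def del: mem_W mem_B mem_pmset)
    qed
  qed
qed

lemma part_b: "\<exists>f. bij_betw f (b_tilde k p n) (b_hat k p n)"
proof
  show "bij_betw (Fb n) (b_tilde k p n) (b_hat k p n)"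
  proof (rule bij_betw_byWitness[where f' = "Gb n"])
    have bQ: "\<And>\<tau>. \<tau> \<in> b_tilde k p n \<Longrightarrow> \<tau> \<in> Qb n" unfolding b_tilde_def Qb_def by blast
    have bE: "\<And>\<tau>. \<tau> \<in> Qb n \<Longrightarrow> \<tau> \<in> b_tilde k p n \<longleftrightarrow> Fb n \<tau> \<in> b_hat k p n"
    proof -
      fix \<tau> assume Q: "\<tau> \<in> Qb n"
      note A = A_b[OF Q]
      have q: "fpf_involution \<tau> (pmset (2*n))" "tau0 (2*n) \<circ> \<tau> = \<tau> \<circ> tau0 (2*n)" "\<tau> ` Bset n \<subseteq> Bset n"
        using Q unfolding Qb_def by auto
      show "\<tau> \<in> b_tilde k p n \<longleftrightarrow> Fb n \<tau> \<in> b_hat k p n"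
        unfolding b_tilde_def b_hat_def mem_Collect_eq A(6) A(4,5)[symmetric] A(7)[symmetric]
        using q A(1,2,3,8) by (auto simp del: mem_posset mem_negset mem_pmset mem_B mem_W)
    qed
    show "\<forall>a\<in>b_tilde k p n. Gb n (Fb n a) = a" using C_b bQ by blast
    show "\<forall>a'\<in>b_hat k p n. Fb n (Gb n a') = a'" using B_b unfolding b_hat_def by blast
    show "Fb n ` b_tilde k p n \<subseteq> b_hat k p n" using bE bQ by blast
    show "Gb n ` b_hat k p n \<subseteq> b_tilde k p n"
    proof
      fix \<tau> assume "\<tau> \<in> Gb n ` b_hat k p n"
      then obtain t where r: "t \<in> b_hat k p n" "\<tau> = Gb n t" by auto
      then have "t permutes pmset n" "tau0 n \<circ> t \<circ> tau0 n = inv t" "fpf_on (tau0 n \<circ> t) (pmset n)"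
        unfolding b_hat_def by auto
      then show "\<tau> \<in> b_tilde k p n" using B_b bE r by metis
    qed
  qed
qed


theorem lemma2:
  fixes n g k p :: nat
  shows "(\<exists>f. bij_betw f (a_tilde g p n) (a_hat g p n))
       \<and> (\<exists>f. bij_betw f (b_tilde k p n) (b_hat k p n))"
  using part_a part_b by blast

end
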